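(* Assume each $f_i$ is $\mu$-strongly convex with $\mu>0$ and has $L$-Lipschitz gradient, let $x^*$ be the minimiser of $F=f+h$, and run SAGA with step size $\gamma=\frac{1}{3L}$ starting from $x^0$ with $\phi_i^0=x^0$ for all $i$. Then for all $k\ge 0$, \[ \mathbb{E}\Vert x^{k}-x^{*}\Vert^{2}\leq \left( 1-\min\left\{ \frac{1}{4n},\frac{\mu}{3L}\right\} \right)^{k} \left[\Vert x^{0}-x^{*}\Vert^{2} +\frac{2n}{3L} \left[f(x^{0}) -\langle f'(x^{*}),x^{0}-x^{*}\rangle -f(x^{*})\right]\right], \] where the expectation is over all random index choices up to step $k$.
   Context: Setting: $f(x)=\frac1n\sum_{i=1}^n f_i(x)$ with each $f_i\colon\mathbb{R}^d\to\mathbb{R}$ convex and differentiable with $L$-Lipschitz gradient $f_i'$; $h\colon\mathbb{R}^d\to\mathbb{R}\cup\{+\infty\}$ is proper, closed, convex; $F=f+h$. The proximal operator is $\mathrm{prox}^h_\gamma(y)=\operatorname{argmin}_{x}\{h(x)+\frac{1}{2\gamma}\Vert x-y\Vert^2\}$. SAGA algorithm with step size $\gamma>0$: start from $x^0\in\mathbb{R}^d$ and $\phi_i^0=x^0$ for all $i$. At iteration $k+1$, given $x^k$ and $\phi_1^k,\dots,\phi_n^k$: pick $j$ uniformly at random from $\{1,\dots,n\}$ (independently of the past); set $\phi_j^{k+1}=x^k$ and $\phi_i^{k+1}=\phi_i^k$ for $i\neq j$; set $w^{k+1}=x^k-\gamma\big[f_j'(\phi_j^{k+1})-f_j'(\phi_j^k)+\frac1n\sum_{i=1}^n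 f_i'(\phi_i^k)\big]$ and $x^{k+1}=\mathrm{prox}^h_\gamma(w^{k+1})$. *)

theory Defs
  imports "HOL-Analysis.Analysis"
begin

definition strongly_convex_grad :: "real \<Rightarrow> ('a::real_inner \<Rightarrow> real) \<Rightarrow> ('a \<Rightarrow> 'a) \<Rightarrow> bool" where
  "strongly_convex_grad \<mu> g g' \<longleftrightarrow>
     (\<forall>x y. g y \<ge> g x + inner (g' x) (y - x) + \<mu> / 2 * (norm (y - x))\<^sup>2)"

definition epigraph_ext :: "('a \<Rightarrow> ereal) \<Rightarrow> ('a \<times> real) set" where
  "epigraph_ext h = {(x, t). h x \<le> ereal t}"

definition proper_fun :: "('a \<Rightarrow> ereal) \<Rightarrow> bool" where
  "proper_fun h \<longleftrightarrow> (\<forall>x. h x \<noteq> -\<infinity>) \<and> (\<exists>x. h x \<noteq> \<infinity>)"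

definition closed_fun :: "('a::topological_space \<Rightarrow> ereal) \<Rightarrow> bool" where
  "closed_fun h \<longleftrightarrow> closed (epigraph_ext h)"

definition convex_fun :: "('a::real_vector \<Rightarrow> ereal) \<Rightarrow> bool" where
  "convex_fun h \<longleftrightarrow> convex (epigraph_ext h)"

definition prox :: "('a::real_normed_vector \<Rightarrow> ereal) \<Rightarrow> real \<Rightarrow> 'a \<Rightarrow> 'a" where
  "prox h \<gamma> y = (SOME x. \<forall>z. h x + ereal (1 / (2 * \<gamma>) * (norm (x - y))\<^sup>2)
                              \<le> h z + ereal (1 / (2 * \<gamma>) * (norm (z - y))\<^sup>2))"

text \<open>One SAGA iteration with chosen index j (indices range over {0..<n}).
  State: (x^k, phi^k).  Note phi_j^{k+1} = x^k.\<close>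
definition saga_step :: "nat \<Rightarrow> (nat \<Rightarrow> 'a::real_normed_vector \<Rightarrow> 'a) \<Rightarrow> ('a \<Rightarrow> ereal) \<Rightarrow> real
     \<Rightarrow> 'a \<times> (nat \<Rightarrow> 'a) \<Rightarrow> nat \<Rightarrow> 'a \<times> (nat \<Rightarrow> 'a)" where
  "saga_step n f' h \<gamma> st j =
     (let x = fst st; \<phi> = snd st; \<phi>' = \<phi>(j := x);
          w = x - \<gamma> *\<^sub>R (f' j (\<phi>' j) - f' j (\<phi> j) + (1 / real n) *\<^sub>R (\<Sum>i<n. f' i (\<phi> i)))
      in (prox h \<gamma> w, \<phi>'))"

definition saga_iter :: "nat \<Rightarrow> (nat \<Rightarrow> 'a::real_normed_vector \<Rightarrow> 'a) \<Rightarrow> ('a \<Rightarrow> ereal) \<Rightarrow> real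
     \<Rightarrow> 'a \<Rightarrow> nat list \<Rightarrow> 'a" where
  "saga_iter n f' h \<gamma> x0 js = fst (foldl (saga_step n f' h \<gamma>) (x0, \<lambda>_. x0) js)"

text \<open>Expectation over k i.i.d. uniform indices in {0..<n}: average over all index sequences.\<close>
definition index_seqs :: "nat \<Rightarrow> nat \<Rightarrow> nat list set" where
  "index_seqs n k = {js. length js = k \<and> set js \<subseteq> {..<n}}"

definition expect_seq :: "nat \<Rightarrow> nat \<Rightarrow> (nat list \<Rightarrow> real) \<Rightarrow> real" where
  "expect_seq n k X = (\<Sum>js\<in>index_seqs n k. X js) / real n ^ k"

end

theory Submission
  imports Defs
begin



lemma descent:
  fixes F :: "'a::real_inner \<Rightarrow> real" and F' :: "'a \<Rightarrow> 'a"
  assumes d: "\<And>x. (F has_derivative (\<lambda>v. inner (F' x) v)) (at x)"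
    and lip: "\<And>x y. norm (F' x - F' y) \<le> L * norm (x - y)"
  shows "F y \<le> F x + inner (F' x) (y - x) + L / 2 * (norm (y - x))\<^sup>2"
proof -
  define v where "v = y - x"
  define g where "g t = F (x + t *\<^sub>R v) - t * inner (F' x) v - L / 2 * t\<^sup>2 * (norm v)\<^sup>2" for t
  have "g 1 \<le> g 0"
  proof (rule DERIV_nonpos_imp_nonincreasing[of 0 1 g])
    fix t :: real assume t: "0 \<le> t" "t \<le> 1"
    have d1: "((\<lambda>t. x + t *\<^sub>R v) has_derivative (\<lambda>s. s *\<^sub>R v)) (at t)"
      by (auto intro!: derivative_eq_intros)
    have d2: "((\<lambda>t. F (x + t *\<^sub>R v)) has_derivative (\<lambda>s. inner (F' (x + t *\<^sub>R v)) (s *\<^sub>R v))) (at t)"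
      using has_derivative_compose[OF d1 d] by simp
    have d3: "((\<lambda>t. F (x + t *\<^sub>R v)) has_real_derivative inner (F' (x + t *\<^sub>R v)) v) (at t)"
    proof -
      have e: "(\<lambda>s. s * inner (F' (x + t *\<^sub>R v)) v) = (*) (inner (F' (x + t *\<^sub>R v)) v)"
        by (rule ext) simp
      show ?thesis unfolding has_field_derivative_def using d2 e by simp
    qed
    have "(g has_real_derivative (inner (F' (x + t *\<^sub>R v)) v - inner (F' x) v - L * t * (norm v)\<^sup>2)) (at t)"
      unfolding g_def by (auto intro!: derivative_eq_intros d3)
    moreover have "inner (F' (x + t *\<^sub>R v)) v - inner (F' x) v - L * t * (norm v)\<^sup>2 \<le> 0"
    proof -
      have "inner (F' (x + t *\<^sub>R v)) v - inner (F' x) v = inner (F' (x + t *\<^sub>R v) - F' x) v"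
        by (simp add: inner_diff_left)
      also have "\<dots> \<le> norm (F' (x + t *\<^sub>R v) - F' x) * norm v" by (rule norm_cauchy_schwarz)
      also have "\<dots> \<le> L * norm (t *\<^sub>R v) * norm v"
        using lip[of "x + t *\<^sub>R v" x] by (simp add: mult_right_mono)
      also have "\<dots> = L * t * (norm v)\<^sup>2" using t by (simp add: power2_eq_square)
      finally show ?thesis by simp
    qed
    ultimately show "\<exists>y. (g has_real_derivative y) (at t) \<and> y \<le> 0" by blast
  qed simp
  thus ?thesis unfolding g_def v_def by (simp add: algebra_simps)
qed



lemma cocoercive:
  fixes P :: "'a::real_inner \<Rightarrow> real" and P' :: "'a \<Rightarrow> 'a"
  assumes M: "M > 0"
    and low: "\<And>x y. P y \<ge> P x + inner (P' x) (y - x)"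
    and up: "\<And>x y. P y \<le> P x + inner (P' x) (y - x) + M / 2 * (norm (y - x))\<^sup>2"
  shows "P y \<ge> P x + inner (P' x) (y - x) + (norm (P' y - P' x))\<^sup>2 / (2 * M)"
proof -
  define d where "d = P' y - P' x"
  define z where "z = y - (1 / M) *\<^sub>R d"
  have 1: "P z \<ge> P x + inner (P' x) (z - x)" by (rule low)
  have 2: "P z \<le> P y + inner (P' y) (z - y) + M / 2 * (norm (z - y))\<^sup>2" by (rule up)
  have e1: "inner (P' x) (z - x) = inner (P' x) (y - x) - (1 / M) * inner (P' x) d"
    unfolding z_def by (simp add: inner_diff_right algebra_simps)
  have e2: "inner (P' y) (z - y) = - (1 / M) * inner (P' y) d"
    unfolding z_def by (simp add: inner_diff_right algebra_simps)
  have e3: "(norm (z - y))\<^sup>2 = (norm d)\<^sup>2 / M\<^sup>2"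
    unfolding z_def using M by (simp add: power_divide)
  have e4: "inner (P' y) d - inner (P' x) d = (norm d)\<^sup>2"
    unfolding d_def by (simp add: power2_norm_eq_inner inner_diff_left inner_diff_right)
  have "P x + inner (P' x) (y - x) - (1 / M) * inner (P' x) d
      \<le> P y - (1 / M) * inner (P' y) d + M / 2 * ((norm d)\<^sup>2 / M\<^sup>2)"
  proof -
    from 2 have "P z \<le> P y - (1 / M) * inner (P' y) d + M / 2 * ((norm d)\<^sup>2 / M\<^sup>2)"
      by (simp only: e2 e3)
    thus ?thesis using 1 e1 by linarith
  qed
  moreover have "M / 2 * ((norm d)\<^sup>2 / M\<^sup>2) = (norm d)\<^sup>2 / (2 * M)"
    using M by (simp add: power2_eq_square field_simps)
  moreover have "(1 / M) * inner (P' y) d - (1 / M) * inner (P' x) d = (norm d)\<^sup>2 / M"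
    using e4 by (metis diff_divide_distrib times_divide_eq_left mult_1)
  moreover have "(norm d)\<^sup>2 / M = (norm d)\<^sup>2 / (2 * M) + (norm d)\<^sup>2 / (2 * M)"
    by (simp add: field_simps)
  ultimately show ?thesis unfolding d_def by linarith
qed

lemma nu_limit:
  fixes c0 c1 :: real
  assumes "\<And>M. M > 0 \<Longrightarrow> M * c1 + c0 \<ge> 0"
  shows "c0 \<ge> 0"
proof (rule ccontr)
  assume c: "\<not> c0 \<ge> 0"
  show False
  proof (cases "c1 \<le> 0")
    case True
    have "1 * c1 + c0 < 0" using True c by linarith
    thus False using assms[of 1] by simp
  next
    case False
    define M where "M = - c0 / (2 * c1)"
    have "M > 0" using False c unfolding M_def by (simp add: field_simps)
    moreover have "M * c1 + c0 = c0 / 2" using False unfolding M_def by (simp add: field_simps)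
    ultimately show False using assms[of M] c by simp
  qed
qed

lemma lemma1:
  fixes F :: "'a::real_inner \<Rightarrow> real" and F' :: "'a \<Rightarrow> 'a"
  assumes mu: "\<mu> > 0" and muL: "\<mu> \<le> L"
    and strong: "\<And>x y. F y \<ge> F x + inner (F' x) (y - x) + \<mu> / 2 * (norm (y - x))\<^sup>2"
    and up: "\<And>x y. F y \<le> F x + inner (F' x) (y - x) + L / 2 * (norm (y - x))\<^sup>2"
  shows "inner (F' x - F' xs) (x - xs) \<ge> (norm (F' x - F' xs))\<^sup>2 / (2 * L)
           + (1 - \<mu> / L) * (F x - F xs - inner (F' xs) (x - xs)) + \<mu> / 2 * (norm (x - xs))\<^sup>2"
proof -
  define A where "A = inner (F' x - F' xs) (x - xs)"
  define D where "D = F x - F xs - inner (F' xs) (x - xs)"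
  define U where "U = (norm (x - xs))\<^sup>2"
  define Q where "Q = (norm (F' x - F' xs))\<^sup>2"
  define H where "H z = F z - \<mu> / 2 * (norm z)\<^sup>2" for z
  define H' where "H' z = F' z - \<mu> *\<^sub>R z" for z
  have sq: "(norm y)\<^sup>2 - (norm x)\<^sup>2 = (norm (y - x))\<^sup>2 + 2 * inner x (y - x)" for x y :: 'a
    by (simp add: power2_norm_eq_inner inner_diff_left inner_diff_right inner_commute algebra_simps)
  have Hexp: "H y - H x - inner (H' x) (y - x) = F y - F x - inner (F' x) (y - x) - \<mu> / 2 * (norm (y - x))\<^sup>2" for x y
  proof -
    have "inner (H' x) (y - x) = inner (F' x) (y - x) - \<mu> * inner x (y - x)"
      unfolding H'_def by (simp add: inner_diff_left)
    moreover have "H y - H x = F y - F x - \<mu> / 2 * ((norm y)\<^sup>2 - (norm x)\<^sup>2)"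
      unfolding H_def by (simp add: algebra_simps)
    ultimately show ?thesis unfolding sq[of y x] by (simp add: algebra_simps)
  qed
  have key: "2 * (M + \<mu>) * A \<ge> 2 * M * D + (M + \<mu>) * \<mu> * U + Q" if M: "M > 0" "M \<ge> L - \<mu>" for M
  proof -
    have low: "H y \<ge> H x + inner (H' x) (y - x)" for x y
    proof -
      have "F y \<ge> F x + inner (F' x) (y - x) + \<mu> / 2 * (norm (y - x))\<^sup>2" by (rule strong)
      moreover have "H y - H x - inner (H' x) (y - x) = F y - F x - inner (F' x) (y - x) - \<mu> / 2 * (norm (y - x))\<^sup>2"
        by (rule Hexp)
      ultimately show ?thesis by linarith
    qed
    have upH: "H y \<le> H x + inner (H' x) (y - x) + M / 2 * (norm (y - x))\<^sup>2" for x y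
    proof -
      have "(L - \<mu>) / 2 * (norm (y - x))\<^sup>2 \<le> M / 2 * (norm (y - x))\<^sup>2"
        using M by (intro mult_right_mono) auto
      moreover have "L / 2 * (norm (y - x))\<^sup>2 - \<mu> / 2 * (norm (y - x))\<^sup>2 = (L - \<mu>) / 2 * (norm (y - x))\<^sup>2"
        by (simp add: algebra_simps)
      moreover have "F y \<le> F x + inner (F' x) (y - x) + L / 2 * (norm (y - x))\<^sup>2" by (rule up)
      moreover have "H y - H x - inner (H' x) (y - x) = F y - F x - inner (F' x) (y - x) - \<mu> / 2 * (norm (y - x))\<^sup>2"
        by (rule Hexp)
      ultimately show ?thesis by linarith
    qed
    have c: "H xs \<ge> H x + inner (H' x) (xs - x) + (norm (H' xs - H' x))\<^sup>2 / (2 * M)"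
      by (rule cocoercive[OF M(1) low upH])
    have c1: "H xs - H x - inner (H' x) (xs - x) = - D + A - \<mu> / 2 * U"
      unfolding Hexp A_def D_def U_def
      by (simp add: inner_diff_left inner_diff_right norm_minus_commute algebra_simps)
    have c2: "(norm (H' xs - H' x))\<^sup>2 = Q - 2 * \<mu> * A + \<mu>\<^sup>2 * U"
    proof -
      have "H' xs - H' x = - ((F' x - F' xs) - \<mu> *\<^sub>R (x - xs))"
        unfolding H'_def by (simp add: algebra_simps)
      hence "(norm (H' xs - H' x))\<^sup>2 = (norm ((F' x - F' xs) - \<mu> *\<^sub>R (x - xs)))\<^sup>2"
        by (metis norm_minus_cancel)
      also have "\<dots> = Q - 2 * \<mu> * A + \<mu>\<^sup>2 * U"
        unfolding Q_def A_def U_def power2_norm_eq_inner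
        by (simp add: inner_diff_left inner_diff_right inner_commute algebra_simps power2_eq_square)
      finally show ?thesis .
    qed
    have "- D + A - \<mu> / 2 * U \<ge> (Q - 2 * \<mu> * A + \<mu>\<^sup>2 * U) / (2 * M)"
    proof -
      have "H x + inner (H' x) (xs - x) + (Q - 2 * \<mu> * A + \<mu>\<^sup>2 * U) / (2 * M) \<le> H xs"
        using c by (simp only: c2)
      thus ?thesis using c1 by linarith
    qed
    hence "2 * M * (- D + A - \<mu> / 2 * U) \<ge> Q - 2 * \<mu> * A + \<mu>\<^sup>2 * U"
      using M by (simp add: field_simps)
    thus ?thesis by (simp add: algebra_simps power2_eq_square)
  qed
  have "A \<ge> Q / (2 * L) + (1 - \<mu> / L) * D + \<mu> / 2 * U"
  proof (cases "\<mu> < L")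
    case True
    have "2 * L * A \<ge> 2 * (L - \<mu>) * D + L * \<mu> * U + Q" using key[of "L - \<mu>"] True by simp
    thus ?thesis using mu True by (simp add: field_simps)
  next
    case False
    hence Le: "L = \<mu>" using muL by simp
    have "M * (2 * A - 2 * D - \<mu> * U) + (2 * \<mu> * A - \<mu> * \<mu> * U - Q) \<ge> 0" if "M > 0" for M
      using key[of M] that Le by (simp add: algebra_simps)
    hence "2 * \<mu> * A - \<mu> * \<mu> * U - Q \<ge> 0" by (rule nu_limit)
    thus ?thesis using Le mu by (simp add: field_simps)
  qed
  thus ?thesis unfolding A_def D_def U_def Q_def .
qed



lemma t_limit:
  fixes A B C :: real
  assumes "\<And>t. 0 < t \<Longrightarrow> t \<le> 1 \<Longrightarrow> A \<le> B + t * C"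
  shows "A \<le> B"
proof (rule ccontr)
  assume c: "\<not> A \<le> B"
  show False
  proof (cases "C \<le> 0")
    case True
    have "1 * C \<le> 0" using True by simp
    thus False using assms[of 1] c by simp
  next
    case False
    define t where "t = min 1 ((A - B) / (2 * C))"
    have t0: "0 < t" "t \<le> 1" using False c unfolding t_def by auto
    have "t * C \<le> (A - B) / (2 * C) * C" unfolding t_def using False by (intro mult_right_mono) auto
    also have "\<dots> = (A - B) / 2" using False by simp
    finally show False using assms[OF t0] c by simp
  qed
qed

lemma subgrad_min:
  fixes h :: "'a::real_vector \<Rightarrow> ereal" and \<Phi> :: "'a \<Rightarrow> real"
  assumes hc: "convex_fun h" and hp: "h p = ereal hp"
    and mn: "\<And>z. ereal (\<Phi> p) + h p \<le> ereal (\<Phi> z) + h z"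
    and ex: "\<And>t. 0 < t \<Longrightarrow> t \<le> 1 \<Longrightarrow> \<Phi> (p + t *\<^sub>R (z - p)) \<le> \<Phi> p + t * G + t\<^sup>2 * K"
    and hz: "h z = ereal r"
  shows "r \<ge> hp - G"
proof -
  have "hp - G - r \<le> 0 + t * K" if t: "0 < t" "t \<le> 1" for t
  proof -
    have e1: "(p, hp) \<in> epigraph_ext h" "(z, r) \<in> epigraph_ext h"
      unfolding epigraph_ext_def using hp hz by auto
    have "(1 - t) *\<^sub>R (p, hp) + t *\<^sub>R (z, r) \<in> epigraph_ext h"
    proof -
      have "convex (epigraph_ext h)" using hc unfolding convex_fun_def .
      from convexD[OF this e1(1) e1(2), of "1 - t" t] t show ?thesis by simp
    qed
    hence "h (p + t *\<^sub>R (z - p)) \<le> ereal ((1 - t) * hp + t * r)"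
      unfolding epigraph_ext_def by (simp add: algebra_simps)
    hence "ereal (\<Phi> p) + ereal hp \<le> ereal (\<Phi> (p + t *\<^sub>R (z - p))) + ereal ((1 - t) * hp + t * r)"
      using mn[of "p + t *\<^sub>R (z - p)"] hp by (metis add_left_mono order_trans)
    hence "\<Phi> p + hp \<le> \<Phi> (p + t *\<^sub>R (z - p)) + ((1 - t) * hp + t * r)" by simp
    hence "\<Phi> p + hp \<le> \<Phi> p + t * G + t\<^sup>2 * K + ((1 - t) * hp + t * r)" using ex[OF t] by linarith
    hence "t * hp \<le> t * (G + t * K + r)" by (simp add: algebra_simps power2_eq_square)
    hence "hp \<le> G + t * K + r" using t by simp
    thus ?thesis by simp
  qed
  hence "hp - G - r \<le> 0" by (rule t_limit)
  thus ?thesis by simp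
qed



lemma prox_exists:
  fixes h :: "'a::euclidean_space \<Rightarrow> ereal"
  assumes g0: "\<gamma> > 0" and pr: "proper_fun h" and cl: "closed_fun h"
    and minor: "\<And>z. ereal (c + inner g z) \<le> h z"
  shows "\<exists>p. \<forall>z. h p + ereal (1 / (2 * \<gamma>) * (norm (p - w))\<^sup>2)
                  \<le> h z + ereal (1 / (2 * \<gamma>) * (norm (z - w))\<^sup>2)"
proof -
  define q where "q z = 1 / (2 * \<gamma>) * (norm (z - w))\<^sup>2" for z
  obtain z0 where "h z0 \<noteq> \<infinity>" using pr unfolding proper_fun_def by auto
  moreover have "h z0 \<noteq> -\<infinity>" using pr unfolding proper_fun_def by auto
  ultimately obtain r0 where r0: "h z0 = ereal r0" by (cases "h z0") auto
  define M where "M = r0 + q z0"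
  define K where "K = epigraph_ext h \<inter> {zt. snd zt + q (fst zt) \<le> M}"
  have contq: "continuous_on UNIV (\<lambda>zt::'a \<times> real. snd zt + q (fst zt))"
    unfolding q_def by (intro continuous_intros)
  have clK: "closed K"
    unfolding K_def
  proof (rule closed_Int)
    show "closed (epigraph_ext h)" using cl unfolding closed_fun_def .
    show "closed {zt::'a \<times> real. snd zt + q (fst zt) \<le> M}"
      using closed_Collect_le[OF contq continuous_on_const] .
  qed
  define A0 where "A0 = \<bar>M - c\<bar> + \<bar>inner g w\<bar>"
  define B where "B = norm g"
  define R where "R = 1 + 2 * \<gamma> * (A0 + B)"
  define lo where "lo = c - B * R - \<bar>inner g w\<bar>"
  have inK: "norm (z - w) \<le> R \<and> lo \<le> t \<and> t \<le> M" if "(z, t) \<in> K" for z t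
  proof -
    have ht: "h z \<le> ereal t" and tq: "t + q z \<le> M" using that unfolding K_def epigraph_ext_def by auto
    have ct: "c + inner g z \<le> t" using minor[of z] ht by (metis ereal_less_eq(3) order_trans)
    have gz: "inner g z \<ge> - B * norm (z - w) - \<bar>inner g w\<bar>"
    proof -
      have "inner g z = inner g (z - w) + inner g w" by (simp add: inner_diff_right)
      moreover have "\<bar>inner g (z - w)\<bar> \<le> B * norm (z - w)" unfolding B_def by (rule Cauchy_Schwarz_ineq2)
      ultimately show ?thesis by linarith
    qed
    have q0: "q z \<ge> 0" unfolding q_def using g0 by simp
    have tM: "t \<le> M" using tq q0 by linarith
    define r where "r = norm (z - w)"
    have r0': "r \<ge> 0" unfolding r_def by simp
    have "q z \<le> M - c - inner g z" using tq ct by linarith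
    hence "r\<^sup>2 / (2 * \<gamma>) \<le> A0 + B * r" using gz unfolding q_def r_def A0_def by auto
    hence rr: "r * r \<le> 2 * \<gamma> * (A0 + B) * r + 2 * \<gamma> * A0 * (1 - r)"
      using g0 by (simp add: field_simps power2_eq_square)
    have rR: "r \<le> R"
    proof (cases "r \<le> 1")
      case True thus ?thesis unfolding R_def using g0 A0_def B_def
        by (smt (verit) abs_ge_zero mult_nonneg_nonneg norm_ge_zero)
    next
      case False
      have "2 * \<gamma> * A0 * (1 - r) \<le> 0" using False g0 unfolding A0_def
        by (intro mult_nonneg_nonpos) auto
      hence "r * r \<le> (2 * \<gamma> * (A0 + B)) * r" using rr by linarith
      hence "r \<le> 2 * \<gamma> * (A0 + B)" using False by simp
      thus ?thesis unfolding R_def by simp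
    qed
    have "B * r \<le> B * R" using rR unfolding B_def by (simp add: mult_left_mono)
    hence "lo \<le> t" using ct gz unfolding lo_def r_def by linarith
    thus ?thesis using rR tM unfolding r_def by simp
  qed
  have bK: "bounded K"
  proof (rule bounded_subset)
    show "bounded (cball w R \<times> {lo..M})" by (intro bounded_Times bounded_cball bounded_closed_interval)
    show "K \<subseteq> cball w R \<times> {lo..M}"
      using inK by (auto simp: dist_norm norm_minus_commute)
  qed
  have cK: "compact K" using clK bK by (simp add: compact_eq_bounded_closed)
  have z0K: "(z0, r0) \<in> K" unfolding K_def epigraph_ext_def M_def using r0 by simp
  have contK: "continuous_on K (\<lambda>zt::'a \<times> real. snd zt + q (fst zt))"
    using contq continuous_on_subset by blast
  obtain pt where ptK: "pt \<in> K" and ptmin: "\<And>y. y \<in> K \<Longrightarrow> snd pt + q (fst pt) \<le> snd y + q (fst y)"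
  proof -
    have "K \<noteq> {}" using z0K by blast
    from continuous_attains_inf[OF cK this contK] show ?thesis using that by blast
  qed
  obtain p tp where pt: "pt = (p, tp)" by (cases pt)
  have hptp: "h p \<le> ereal tp" and tpM: "tp + q p \<le> M" using ptK unfolding pt K_def epigraph_ext_def by auto
  have "h p + ereal (q p) \<le> h z + ereal (q z)" for z
  proof (cases "h z")
    case (real r)
    have "h p + ereal (q p) \<le> ereal (tp + q p)" 
    proof -
      have "h p + ereal (q p) \<le> ereal tp + ereal (q p)" using hptp by (rule add_right_mono)
      thus ?thesis by simp
    qed
    also have "ereal (tp + q p) \<le> ereal (r + q z)"
    proof (cases "(z, r) \<in> K")
      case True
      thus ?thesis using ptmin[OF True] unfolding pt by simp
    next
      case False
      hence "r + q z > M" unfolding K_def epigraph_ext_def using real by auto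
      thus ?thesis using tpM by simp
    qed
    finally show ?thesis using real by simp
  next
    case PInf thus ?thesis by simp
  next
    case MInf thus ?thesis using pr unfolding proper_fun_def by auto
  qed
  thus ?thesis unfolding q_def by blast
qed

lemma prox_min:
  fixes h :: "'a::euclidean_space \<Rightarrow> ereal"
  assumes g0: "\<gamma> > 0" and pr: "proper_fun h" and cl: "closed_fun h"
    and minor: "\<And>z. ereal (c + inner g z) \<le> h z"
  shows "h (prox h \<gamma> w) + ereal (1 / (2 * \<gamma>) * (norm (prox h \<gamma> w - w))\<^sup>2)
                  \<le> h z + ereal (1 / (2 * \<gamma>) * (norm (z - w))\<^sup>2)"
  using someI_ex[OF prox_exists[OF g0 pr cl minor, of w]] unfolding prox_def by blast





locale sagaloc =
  fixes n :: nat and f :: "nat \<Rightarrow> 'a::euclidean_space \<Rightarrow> real" and f' :: "nat \<Rightarrow> 'a \<Rightarrow> 'a"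
    and h :: "'a \<Rightarrow> ereal" and L \<mu> :: real and xs :: 'a
  assumes n_pos: "n \<ge> 1"
    and mu_pos: "\<mu> > 0" and L_pos: "L > 0"
    and deriv: "\<And>i x. i < n \<Longrightarrow> (f i has_derivative (\<lambda>v. inner (f' i x) v)) (at x)"
    and lip: "\<And>i x y. i < n \<Longrightarrow> norm (f' i x - f' i y) \<le> L * norm (x - y)"
    and strong: "\<And>i. i < n \<Longrightarrow> strongly_convex_grad \<mu> (f i) (f' i)"
    and h_proper: "proper_fun h" and h_closed: "closed_fun h" and h_convex: "convex_fun h"
    and xs_min: "\<And>x. ereal ((1 / real n) * (\<Sum>i<n. f i xs)) + h xs
                       \<le> ereal ((1 / real n) * (\<Sum>i<n. f i x)) + h x"
begin

definition "\<gamma> = 1 / (3 * L)"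
definition "s = (1 / real n) *\<^sub>R (\<Sum>i<n. f' i xs)"
definition "Di i y = f i y - f i xs - inner (f' i xs) (y - xs)"

lemma gam_pos: "\<gamma> > 0" unfolding \<gamma>_def using L_pos by simp
lemma gam_L: "3 * \<gamma> * L = 1" unfolding \<gamma>_def using L_pos by simp

lemma strong': "i < n \<Longrightarrow> f i y \<ge> f i x + inner (f' i x) (y - x) + \<mu> / 2 * (norm (y - x))\<^sup>2"
  using strong unfolding strongly_convex_grad_def by blast

lemma upper: "i < n \<Longrightarrow> f i y \<le> f i x + inner (f' i x) (y - x) + L / 2 * (norm (y - x))\<^sup>2"
  by (rule descent[OF deriv lip])

lemma mu_le_L: "\<mu> \<le> L"
proof -
  obtain e :: 'a where e: "e \<in> Basis" using nonempty_Basis by blast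
  have ne: "norm e = 1" using e by simp
  have 0: "0 < n" using n_pos by simp
  have a1: "f 0 0 \<ge> f 0 e + inner (f' 0 e) (0 - e) + \<mu> / 2 * (norm (0 - e))\<^sup>2" by (rule strong'[OF 0])
  have a2: "f 0 e \<ge> f 0 0 + inner (f' 0 0) (e - 0) + \<mu> / 2 * (norm (e - 0))\<^sup>2" by (rule strong'[OF 0])
  have "\<mu> \<le> inner (f' 0 e - f' 0 0) e" using a1 a2 ne by (simp add: inner_diff_left)
  also have "\<dots> \<le> norm (f' 0 e - f' 0 0) * norm e" by (rule norm_cauchy_schwarz)
  also have "\<dots> \<le> L * norm (e - 0) * norm e" using lip[OF 0, of e 0] ne by simp
  finally show ?thesis using ne by simp
qed

lemma lem1: "i < n \<Longrightarrow> inner (f' i x - f' i xs) (x - xs) \<ge> (norm (f' i x - f' i xs))\<^sup>2 / (2 * L)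
           + (1 - \<mu> / L) * Di i x + \<mu> / 2 * (norm (x - xs))\<^sup>2"
  unfolding Di_def by (rule lemma1[OF mu_pos mu_le_L strong' upper])

lemma coco: "i < n \<Longrightarrow> (norm (f' i y - f' i xs))\<^sup>2 \<le> 2 * L * Di i y"
proof -
  assume i: "i < n"
  have low: "f i y \<ge> f i x + inner (f' i x) (y - x)" for x y
  proof -
    have "0 \<le> \<mu> / 2 * (norm (y - x))\<^sup>2" using mu_pos by simp
    thus ?thesis using strong'[OF i, where x=x and y=y] by linarith
  qed
  have "f i y \<ge> f i xs + inner (f' i xs) (y - xs) + (norm (f' i y - f' i xs))\<^sup>2 / (2 * L)"
    by (rule cocoercive[OF L_pos low upper[OF i]])
  thus ?thesis unfolding Di_def using L_pos by (simp add: field_simps)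
qed

lemma Di_nonneg: "i < n \<Longrightarrow> Di i y \<ge> 0"
proof -
  assume i: "i < n"
  have "0 \<le> 2 * L * Di i y" using coco[OF i, of y] zero_le_power2 order_trans by blast
  thus ?thesis using L_pos by (simp add: zero_le_mult_iff)
qed

lemma Di_strong: "i < n \<Longrightarrow> Di i x \<le> inner (f' i x - f' i xs) (x - xs) - \<mu> / 2 * (norm (x - xs))\<^sup>2"
  using strong'[where i=i and x=x and y=xs] unfolding Di_def
  by (simp add: inner_diff_left inner_diff_right norm_minus_commute algebra_simps)

definition "hxs = real_of_ereal (h xs)"

lemma hxs: "h xs = ereal hxs"
proof -
  obtain z where z: "h z \<noteq> \<infinity>" using h_proper unfolding proper_fun_def by auto
  have "h xs \<noteq> \<infinity>"
  proof
    assume "h xs = \<infinity>"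
    hence "ereal ((1 / real n) * (\<Sum>i<n. f i xs)) + h xs = \<infinity>" by simp
    moreover have "ereal ((1 / real n) * (\<Sum>i<n. f i z)) + h z \<noteq> \<infinity>" using z h_proper
      unfolding proper_fun_def by (cases "h z") auto
    ultimately show False using xs_min[of z] by simp
  qed
  moreover have "h xs \<noteq> -\<infinity>" using h_proper unfolding proper_fun_def by auto
  ultimately show ?thesis unfolding hxs_def by (cases "h xs") auto
qed

lemma subgrad_xs: "h z = ereal r \<Longrightarrow> r \<ge> hxs - inner s (z - xs)"
proof -
  assume hz: "h z = ereal r"
  let ?F = "\<lambda>z. (1 / real n) * (\<Sum>i<n. f i z)"
  show ?thesis
  proof (rule subgrad_min[OF h_convex hxs _ _ hz, where \<Phi> = ?F and K = "L / 2 * (norm (z - xs))\<^sup>2"])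
    show "ereal (?F xs) + h xs \<le> ereal (?F y) + h y" for y by (rule xs_min)
    fix t :: real assume t: "0 < t" "t \<le> 1"
    have "(\<Sum>i<n. f i (xs + t *\<^sub>R (z - xs))) \<le> (\<Sum>i<n. f i xs + t * inner (f' i xs) (z - xs) + t\<^sup>2 * (L / 2 * (norm (z - xs))\<^sup>2))"
    proof (rule sum_mono)
      fix i assume "i \<in> {..<n}"
      hence i: "i < n" by simp
      have "f i (xs + t *\<^sub>R (z - xs)) \<le> f i xs + inner (f' i xs) (xs + t *\<^sub>R (z - xs) - xs) + L / 2 * (norm (xs + t *\<^sub>R (z - xs) - xs))\<^sup>2"
        by (rule upper[OF i])
      also have "\<dots> = f i xs + t * inner (f' i xs) (z - xs) + t\<^sup>2 * (L / 2 * (norm (z - xs))\<^sup>2)"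
        using t by (simp add: power_mult_distrib)
      finally show "f i (xs + t *\<^sub>R (z - xs)) \<le> f i xs + t * inner (f' i xs) (z - xs) + t\<^sup>2 * (L / 2 * (norm (z - xs))\<^sup>2)" .
    qed
    also have "\<dots> = (\<Sum>i<n. f i xs) + t * inner (\<Sum>i<n. f' i xs) (z - xs) + real n * (t\<^sup>2 * (L / 2 * (norm (z - xs))\<^sup>2))"
      by (simp add: sum.distrib sum_distrib_left inner_sum_left)
    finally have "?F (xs + t *\<^sub>R (z - xs)) \<le> (1 / real n) * ((\<Sum>i<n. f i xs) + t * inner (\<Sum>i<n. f' i xs) (z - xs) + real n * (t\<^sup>2 * (L / 2 * (norm (z - xs))\<^sup>2)))"
      by (simp add: divide_right_mono)
    also have "\<dots> = ?F xs + t * inner s (z - xs) + t\<^sup>2 * (L / 2 * (norm (z - xs))\<^sup>2)"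
      unfolding s_def using n_pos by (simp add: field_simps)
    finally show "?F (xs + t *\<^sub>R (z - xs)) \<le> ?F xs + t * inner s (z - xs) + t\<^sup>2 * (L / 2 * (norm (z - xs))\<^sup>2)" .
  qed
qed


lemma minor: "ereal ((hxs + inner s xs) + inner (-s) z) \<le> h z"
proof (cases "h z")
  case (real r)
  have "r \<ge> hxs - inner s (z - xs)" by (rule subgrad_xs[OF real])
  thus ?thesis using real by (simp add: inner_diff_right)
next
  case PInf thus ?thesis by simp
next
  case MInf thus ?thesis using h_proper unfolding proper_fun_def by auto
qed

lemma prox_prop: "h (prox h \<gamma> w) + ereal (1 / (2 * \<gamma>) * (norm (prox h \<gamma> w - w))\<^sup>2)
                  \<le> h z + ereal (1 / (2 * \<gamma>) * (norm (z - w))\<^sup>2)"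
  by (rule prox_min[OF gam_pos h_proper h_closed minor])

lemma prox_fin: "\<exists>hp. h (prox h \<gamma> w) = ereal hp"
proof -
  have le: "h (prox h \<gamma> w) + ereal (1 / (2 * \<gamma>) * (norm (prox h \<gamma> w - w))\<^sup>2)
                  \<le> ereal hxs + ereal (1 / (2 * \<gamma>) * (norm (xs - w))\<^sup>2)"
    using prox_prop[of w xs] hxs by simp
  have "h (prox h \<gamma> w) \<noteq> \<infinity>"
  proof
    assume "h (prox h \<gamma> w) = \<infinity>" thus False using le by simp
  qed
  moreover have "h (prox h \<gamma> w) \<noteq> -\<infinity>" using h_proper unfolding proper_fun_def by auto
  ultimately show ?thesis by (cases "h (prox h \<gamma> w)") auto
qed

lemma norm_add_sq: "(norm (a + b))\<^sup>2 = (norm a)\<^sup>2 + 2 * inner a b + (norm (b::'a))\<^sup>2"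
  by (simp add: power2_norm_eq_inner inner_add_left inner_add_right inner_commute)

lemma subgrad_prox:
  assumes hp: "h (prox h \<gamma> w) = ereal hp" and hz: "h z = ereal r"
  shows "r \<ge> hp - (1 / \<gamma>) * inner (prox h \<gamma> w - w) (z - prox h \<gamma> w)"
proof -
  define p where "p = prox h \<gamma> w"
  have hp': "h p = ereal hp" using hp unfolding p_def .
  show ?thesis unfolding p_def[symmetric]
  proof (rule subgrad_min[OF h_convex hp' _ _ hz, where \<Phi> = "\<lambda>z. 1 / (2 * \<gamma>) * (norm (z - w))\<^sup>2"
        and K = "(norm (z - p))\<^sup>2 / (2 * \<gamma>)"])
    show "ereal (1 / (2 * \<gamma>) * (norm (p - w))\<^sup>2) + h p \<le> ereal (1 / (2 * \<gamma>) * (norm (y - w))\<^sup>2) + h y" for y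
      using prox_prop[of w y] unfolding p_def by (simp add: add.commute)
    fix t :: real assume t: "0 < t" "t \<le> 1"
    have "(norm (p + t *\<^sub>R (z - p) - w))\<^sup>2 = (norm ((p - w) + t *\<^sub>R (z - p)))\<^sup>2"
      by (simp add: algebra_simps)
    also have "\<dots> = (norm (p - w))\<^sup>2 + 2 * t * inner (p - w) (z - p) + t\<^sup>2 * (norm (z - p))\<^sup>2"
      unfolding norm_add_sq by (simp add: power_mult_distrib)
    finally have e: "(norm (p + t *\<^sub>R (z - p) - w))\<^sup>2 = (norm (p - w))\<^sup>2 + 2 * t * inner (p - w) (z - p) + t\<^sup>2 * (norm (z - p))\<^sup>2" .
    show "1 / (2 * \<gamma>) * (norm (p + t *\<^sub>R (z - p) - w))\<^sup>2
          \<le> 1 / (2 * \<gamma>) * (norm (p - w))\<^sup>2 + t * (1 / \<gamma> * inner (p - w) (z - p)) + t\<^sup>2 * ((norm (z - p))\<^sup>2 / (2 * \<gamma>))"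
      unfolding e using gam_pos by (simp add: field_simps)
  qed
qed

lemma nonexp: "(norm (prox h \<gamma> w - xs))\<^sup>2 \<le> (norm (w - (xs - \<gamma> *\<^sub>R s)))\<^sup>2"
proof -
  define p where "p = prox h \<gamma> w"
  obtain hp where hp: "h p = ereal hp" using prox_fin unfolding p_def by blast
  have a: "hxs \<ge> hp - (1 / \<gamma>) * inner (p - w) (xs - p)"
    using subgrad_prox[OF hp[unfolded p_def] hxs] unfolding p_def .
  have b: "hp \<ge> hxs - inner s (p - xs)" by (rule subgrad_xs[OF hp])
  have "(1 / \<gamma>) * inner (p - w) (xs - p) + inner s (p - xs) \<ge> 0" using a b by linarith
  hence "\<gamma> * ((1 / \<gamma>) * inner (p - w) (xs - p) + inner s (p - xs)) \<ge> 0"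
    using gam_pos by simp
  hence "inner (p - w) (xs - p) + \<gamma> * inner s (p - xs) \<ge> 0"
    using gam_pos by (simp add: algebra_simps)
  moreover have "inner (w - (xs - \<gamma> *\<^sub>R s) - (p - xs)) (p - xs) = inner (p - w) (xs - p) + \<gamma> * inner s (p - xs)"
  proof -
    have "w - (xs - \<gamma> *\<^sub>R s) - (p - xs) = - (p - w) + \<gamma> *\<^sub>R s" by (simp add: algebra_simps)
    hence "inner (w - (xs - \<gamma> *\<^sub>R s) - (p - xs)) (p - xs) = inner (- (p - w)) (p - xs) + \<gamma> * inner s (p - xs)"
      by (simp only: inner_add_left inner_scaleR_left)
    moreover have "inner (- (p - w)) (p - xs) = inner (p - w) (xs - p)"
      by (metis inner_minus_left inner_minus_right minus_diff_eq)
    ultimately show ?thesis by simp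
  qed
  ultimately have c: "inner (w - (xs - \<gamma> *\<^sub>R s) - (p - xs)) (p - xs) \<ge> 0" by simp
  define d where "d = p - xs"
  define e where "e = w - (xs - \<gamma> *\<^sub>R s)"
  have "inner (e - d) d \<ge> 0" using c unfolding d_def e_def .
  hence "(norm d)\<^sup>2 \<le> inner e d"
    by (simp add: inner_diff_left power2_norm_eq_inner)
  also have "\<dots> \<le> norm e * norm d" by (rule norm_cauchy_schwarz)
  finally have "norm d * norm d \<le> norm e * norm d" by (simp add: power2_eq_square)
  hence "norm d \<le> norm e"
    by (metis mult_right_le_imp_le norm_ge_zero order.order_iff_strict mult_zero_right zero_less_norm_iff order_refl)
  hence "(norm d)\<^sup>2 \<le> (norm e)\<^sup>2" by (simp add: power_mono)
  thus ?thesis unfolding d_def e_def p_def .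
qed

end



lemma normsq_add: "(norm (a + b))\<^sup>2 = (norm a)\<^sup>2 + 2 * inner a b + (norm (b::'a::real_inner))\<^sup>2"
  by (simp add: power2_norm_eq_inner inner_add_left inner_add_right inner_commute)

lemma G1: "(\<Sum>j\<in>A. (norm (y j + c))\<^sup>2) = (\<Sum>j\<in>A. (norm (y j))\<^sup>2) + 2 * inner (\<Sum>j\<in>A. y j) (c::'a::real_inner) + real (card A) * (norm c)\<^sup>2"
  by (simp add: normsq_add sum.distrib inner_sum_left sum_distrib_left)

lemma young3: "(norm (p - q))\<^sup>2 \<le> 3 * (norm p)\<^sup>2 + 3 / 2 * (norm (q::'a::real_inner))\<^sup>2"
proof -
  have "0 \<le> (norm (2 *\<^sub>R p + q))\<^sup>2" by simp
  also have "\<dots> = 4 * (norm p)\<^sup>2 + 4 * inner p q + (norm q)\<^sup>2"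
    unfolding normsq_add by (simp add: power_mult_distrib)
  finally have a: "0 \<le> 4 * (norm p)\<^sup>2 + 4 * inner p q + (norm q)\<^sup>2" .
  have "(norm (p - q))\<^sup>2 = (norm p)\<^sup>2 - 2 * inner p q + (norm q)\<^sup>2"
    using normsq_add[of p "-q"] by simp
  thus ?thesis using a by linarith
qed

lemma young_mu: "\<mu> > 0 \<Longrightarrow> inner a u \<le> ((norm a)\<^sup>2 + \<mu>\<^sup>2 * (norm (u::'a::real_inner))\<^sup>2) / (2 * \<mu>)"
proof -
  assume m: "\<mu> > 0"
  have "0 \<le> (norm (a - \<mu> *\<^sub>R u))\<^sup>2" by simp
  also have "\<dots> = (norm a)\<^sup>2 - 2 * \<mu> * inner a u + \<mu>\<^sup>2 * (norm u)\<^sup>2"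
    using normsq_add[of a "- (\<mu> *\<^sub>R u)"] by (simp add: power_mult_distrib)
  finally show ?thesis using m by (simp add: field_simps)
qed

context sagaloc begin

definition "cc = 2 * real n * \<gamma> * (1 - \<gamma> * \<mu>)"
definition "\<rho> = 1 - min (1 / (4 * real n)) (\<mu> / (3 * L))"
definition "Psi \<phi> = (\<Sum>i<n. Di i (\<phi> i))"
definition "V st = (norm (fst st - xs))\<^sup>2 + cc * ((1 / real n) * Psi (snd st))"

lemma Psi_upd: "j < n \<Longrightarrow> Psi (\<phi>(j := x)) = Psi \<phi> + (Di j x - Di j (\<phi> j))"
proof -
  assume j: "j < n"
  have "Psi (\<phi>(j := x)) = (\<Sum>i<n. Di i (\<phi> i) + (if i = j then Di j x - Di j (\<phi> j) else 0))"
    unfolding Psi_def by (rule sum.cong) auto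
  also have "\<dots> = Psi \<phi> + (Di j x - Di j (\<phi> j))"
    unfolding Psi_def using j by (simp add: sum.distrib)
  finally show ?thesis .
qed

lemma Psi_nonneg: "Psi \<phi> \<ge> 0" unfolding Psi_def by (rule sum_nonneg) (simp add: Di_nonneg)


lemma step_eq: "j < n \<Longrightarrow> saga_step n f' h \<gamma> (x, \<phi>) j =
   (prox h \<gamma> (x - \<gamma> *\<^sub>R (f' j x - f' j (\<phi> j) + (1 / real n) *\<^sub>R (\<Sum>i<n. f' i (\<phi> i)))), \<phi>(j := x))"
  unfolding saga_step_def Let_def by simp

lemma one_step: "(\<Sum>j<n. V (saga_step n f' h \<gamma> (x, \<phi>) j)) \<le> real n * \<rho> * V (x, \<phi>)"
proof -
  define u where "u = x - xs"
  define a where "a j = f' j x - f' j xs" for j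
  define b where "b j = f' j (\<phi> j) - f' j xs" for j
  define bb where "bb = (1 / real n) *\<^sub>R (\<Sum>i<n. b i)"
  define abar where "abar = (1 / real n) *\<^sub>R (\<Sum>i<n. a i)"
  define e where "e j = a j - b j + bb" for j
  define w where "w j = x - \<gamma> *\<^sub>R (f' j x - f' j (\<phi> j) + (1 / real n) *\<^sub>R (\<Sum>i<n. f' i (\<phi> i)))" for j
  have n0: "real n > 0" using n_pos by simp
  have nn: "real n * (1 / real n) = 1" using n0 by simp
  have sumb: "(\<Sum>i<n. b i) = real n *\<^sub>R bb" unfolding bb_def using nn by simp
  have suma: "(\<Sum>i<n. a i) = real n *\<^sub>R abar" unfolding abar_def using nn by simp
  have bbs: "(1 / real n) *\<^sub>R (\<Sum>i<n. f' i (\<phi> i)) = bb + s"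
    unfolding bb_def s_def b_def by (simp add: sum_subtractf scaleR_diff_right)
  have weq: "w j - (xs - \<gamma> *\<^sub>R s) = u - \<gamma> *\<^sub>R e j" for j
    unfolding w_def bbs u_def e_def a_def b_def by (simp add: algebra_simps)
  have dist1: "(\<Sum>j<n. (norm (prox h \<gamma> (w j) - xs))\<^sup>2) \<le> (\<Sum>j<n. (norm (u - \<gamma> *\<^sub>R e j))\<^sup>2)"
    by (rule sum_mono) (metis nonexp weq)
  have sume: "(\<Sum>j<n. e j) = (\<Sum>j<n. a j)"
    unfolding e_def by (simp add: sum.distrib sum_subtractf sumb sum_constant_scaleR)
  have dist2: "(\<Sum>j<n. (norm (u - \<gamma> *\<^sub>R e j))\<^sup>2)
      = \<gamma>\<^sup>2 * (\<Sum>j<n. (norm (e j))\<^sup>2) - 2 * \<gamma> * inner (\<Sum>j<n. a j) u + real n * (norm u)\<^sup>2"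
  proof -
    have "(\<Sum>j<n. (norm (u - \<gamma> *\<^sub>R e j))\<^sup>2) = (\<Sum>j<n. (norm ((- \<gamma> *\<^sub>R e j) + u))\<^sup>2)"
      by (simp add: algebra_simps)
    also have "\<dots> = (\<Sum>j<n. (norm (- \<gamma> *\<^sub>R e j))\<^sup>2) + 2 * inner (\<Sum>j<n. - \<gamma> *\<^sub>R e j) u + real n * (norm u)\<^sup>2"
      by (subst G1) simp
    also have "(\<Sum>j<n. (norm (- \<gamma> *\<^sub>R e j))\<^sup>2) = \<gamma>\<^sup>2 * (\<Sum>j<n. (norm (e j))\<^sup>2)"
      by (simp add: power_mult_distrib sum_distrib_left)
    also have "inner (\<Sum>j<n. - \<gamma> *\<^sub>R e j) u = - \<gamma> * inner (\<Sum>j<n. a j) u"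
      by (simp add: sum_negf scaleR_sum_right[symmetric] sume)
    finally show ?thesis by simp
  qed
  define P where "P j = (a j - abar) - (b j - bb)" for j
  have eP: "e j = P j + abar" for j unfolding e_def P_def by (simp add: algebra_simps)
  have sumP: "(\<Sum>j<n. P j) = 0"
    unfolding P_def by (simp add: sum_subtractf suma sumb sum_constant_scaleR)
  have v1: "(\<Sum>j<n. (norm (e j))\<^sup>2) = (\<Sum>j<n. (norm (P j))\<^sup>2) + real n * (norm abar)\<^sup>2"
    unfolding eP by (subst G1) (simp add: sumP)
  have v2: "(\<Sum>j<n. (norm (P j))\<^sup>2) \<le> 3 * (\<Sum>j<n. (norm (a j - abar))\<^sup>2) + 3 / 2 * (\<Sum>j<n. (norm (b j - bb))\<^sup>2)"
  proof -
    have "(\<Sum>j<n. (norm (P j))\<^sup>2) \<le> (\<Sum>j<n. 3 * (norm (a j - abar))\<^sup>2 + 3 / 2 * (norm (b j - bb))\<^sup>2)"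
      unfolding P_def by (rule sum_mono) (rule young3)
    also have "\<dots> = 3 * (\<Sum>j<n. (norm (a j - abar))\<^sup>2) + 3 / 2 * (\<Sum>j<n. (norm (b j - bb))\<^sup>2)"
      by (simp add: sum.distrib sum_distrib_left)
    finally show ?thesis .
  qed
  have v3: "(\<Sum>j<n. (norm (a j - abar))\<^sup>2) = (\<Sum>j<n. (norm (a j))\<^sup>2) - real n * (norm abar)\<^sup>2"
  proof -
    have "(\<Sum>j<n. (norm (a j - abar))\<^sup>2) = (\<Sum>j<n. (norm (a j + - abar))\<^sup>2)" by simp
    also have "\<dots> = (\<Sum>j<n. (norm (a j))\<^sup>2) + 2 * inner (real n *\<^sub>R abar) (- abar) + real n * (norm abar)\<^sup>2"
      by (subst G1) (simp add: suma)
    finally show ?thesis by (simp add: power2_norm_eq_inner)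
  qed
  have v4: "(\<Sum>j<n. (norm (b j - bb))\<^sup>2) \<le> (\<Sum>j<n. (norm (b j))\<^sup>2)"
  proof -
    have "(\<Sum>j<n. (norm (b j - bb))\<^sup>2) = (\<Sum>j<n. (norm (b j + - bb))\<^sup>2)" by simp
    also have "\<dots> = (\<Sum>j<n. (norm (b j))\<^sup>2) + 2 * inner (real n *\<^sub>R bb) (- bb) + real n * (norm bb)\<^sup>2"
      by (subst G1) (simp add: sumb)
    also have "\<dots> = (\<Sum>j<n. (norm (b j))\<^sup>2) - real n * (norm bb)\<^sup>2"
      by (simp add: power2_norm_eq_inner)
    finally show ?thesis using n0 by simp
  qed
  define SQa where "SQa = (\<Sum>j<n. (norm (a j))\<^sup>2)"
  define SQb where "SQb = (\<Sum>j<n. (norm (b j))\<^sup>2)"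
  define Na where "Na = (norm abar)\<^sup>2"
  define SE where "SE = (\<Sum>j<n. (norm (e j))\<^sup>2)"
  have var: "SE \<le> 3 * SQa + 3 / 2 * SQb - 2 * real n * Na"
    using v1 v2 v3 v4 unfolding SE_def SQa_def SQb_def Na_def by linarith
  define U where "U = (norm u)\<^sup>2"
  define SA where "SA = inner (\<Sum>j<n. a j) u"
  define SD where "SD = (\<Sum>j<n. Di j x)"
  define Sp where "Sp = Psi \<phi>"
  have SA_sum: "SA = (\<Sum>j<n. inner (a j) u)" unfolding SA_def by (simp add: inner_sum_left)
  have i1: "SA \<ge> SQa / (2 * L) + (1 - \<mu> / L) * SD + real n * (\<mu> / 2 * U)"
  proof -
    have "(\<Sum>j<n. (norm (a j))\<^sup>2 / (2 * L) + (1 - \<mu> / L) * Di j x + \<mu> / 2 * U) \<le> (\<Sum>j<n. inner (a j) u)"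
    proof (rule sum_mono)
      fix j assume "j \<in> {..<n}"
      thus "(norm (a j))\<^sup>2 / (2 * L) + (1 - \<mu> / L) * Di j x + \<mu> / 2 * U \<le> inner (a j) u"
        unfolding a_def u_def U_def using lem1[of j x] by simp
    qed
    thus ?thesis unfolding SA_sum SQa_def SD_def
      by (simp add: sum.distrib sum_divide_distrib sum_distrib_left)
  qed
  have i2: "real n * Na \<ge> 2 * \<mu> * SD"
  proof -
    have "SD \<le> (\<Sum>j<n. inner (a j) u - \<mu> / 2 * U)"
      unfolding SD_def
    proof (rule sum_mono)
      fix j assume "j \<in> {..<n}"
      thus "Di j x \<le> inner (a j) u - \<mu> / 2 * U"
        unfolding a_def u_def U_def using Di_strong[of j x] by simp
    qed
    also have "\<dots> = SA - real n * (\<mu> / 2 * U)" unfolding SA_sum by (simp add: sum_subtractf)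
    also have "SA = real n * inner abar u" unfolding SA_def suma by simp
    also have "inner abar u \<le> (Na + \<mu>\<^sup>2 * U) / (2 * \<mu>)" unfolding Na_def U_def by (rule young_mu[OF mu_pos])
    finally have "SD \<le> real n * ((Na + \<mu>\<^sup>2 * U) / (2 * \<mu>)) - real n * (\<mu> / 2 * U)"
      using n0 by (smt (verit) mult_left_mono)
    also have "\<dots> = real n * Na / (2 * \<mu>)" using mu_pos by (simp add: field_simps power2_eq_square)
    finally show ?thesis using mu_pos by (simp add: field_simps)
  qed
  have i3: "SQb \<le> 2 * L * Sp"
  proof -
    have "SQb \<le> (\<Sum>j<n. 2 * L * Di j (\<phi> j))" unfolding SQb_def b_def by (rule sum_mono) (simp add: coco)
    thus ?thesis unfolding Sp_def Psi_def by (simp add: sum_distrib_left)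
  qed
  have SDn: "SD \<ge> 0" unfolding SD_def by (rule sum_nonneg) (simp add: Di_nonneg)
  have Spn: "Sp \<ge> 0" unfolding Sp_def by (rule Psi_nonneg)
  have Un: "U \<ge> 0" unfolding U_def by simp
  have psisum: "(\<Sum>j<n. Psi (\<phi>(j := x))) = real n * Sp + SD - Sp"
  proof -
    have "(\<Sum>j<n. Psi (\<phi>(j := x))) = (\<Sum>j<n. Sp + (Di j x - Di j (\<phi> j)))"
      by (rule sum.cong) (simp_all add: Psi_upd Sp_def)
    thus ?thesis unfolding SD_def Sp_def Psi_def by (simp add: sum.distrib sum_subtractf)
  qed
  have Vsum: "(\<Sum>j<n. V (saga_step n f' h \<gamma> (x, \<phi>) j))
      = (\<Sum>j<n. (norm (prox h \<gamma> (w j) - xs))\<^sup>2) + cc * ((1 / real n) * (real n * Sp + SD - Sp))"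
  proof -
    have "(\<Sum>j<n. V (saga_step n f' h \<gamma> (x, \<phi>) j))
        = (\<Sum>j<n. (norm (prox h \<gamma> (w j) - xs))\<^sup>2 + cc * ((1 / real n) * Psi (\<phi>(j := x))))"
      by (rule sum.cong) (simp_all add: step_eq V_def w_def)
    also have "\<dots> = (\<Sum>j<n. (norm (prox h \<gamma> (w j) - xs))\<^sup>2) + cc * ((1 / real n) * (\<Sum>j<n. Psi (\<phi>(j := x))))"
      by (simp add: sum.distrib sum_distrib_left)
    finally show ?thesis unfolding psisum .
  qed
  have VV: "V (x, \<phi>) = U + cc * ((1 / real n) * Sp)" unfolding V_def U_def u_def Sp_def by simp
  have LHS: "(\<Sum>j<n. V (saga_step n f' h \<gamma> (x, \<phi>) j))
      \<le> \<gamma>\<^sup>2 * (3 * SQa + 3 / 2 * SQb - 2 * real n * Na) - 2 * \<gamma> * SA + real n * U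
         + cc * ((1 / real n) * (real n * Sp + SD - Sp))"
  proof -
    have "\<gamma>\<^sup>2 * SE \<le> \<gamma>\<^sup>2 * (3 * SQa + 3 / 2 * SQb - 2 * real n * Na)"
      using var by (simp add: mult_left_mono)
    thus ?thesis using Vsum dist1 dist2 unfolding SE_def SA_def U_def by linarith
  qed
  have gL: "3 * \<gamma> * L = 1" by (rule gam_L)
  have gp: "\<gamma> > 0" by (rule gam_pos)
  have gL3: "\<gamma> * L = 1 / 3" using gL by (simp add: field_simps)
  have gmu: "\<gamma> * \<mu> \<le> 1 / 3"
  proof -
    have "\<gamma> * \<mu> \<le> \<gamma> * L" using mu_le_L gp by (simp add: mult_left_mono)
    thus ?thesis using gL3 by simp
  qed
  have T1: "- 2 * \<gamma> * SA + 3 * \<gamma>\<^sup>2 * SQa \<le> - 2 * \<gamma> * (1 - \<mu> / L) * SD - real n * \<gamma> * \<mu> * U"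
  proof -
    have "2 * \<gamma> * SA \<ge> 2 * \<gamma> * (SQa / (2 * L) + (1 - \<mu> / L) * SD + real n * (\<mu> / 2 * U))"
      using i1 gp by (simp add: mult_left_mono)
    moreover have "2 * \<gamma> * (SQa / (2 * L)) = 3 * \<gamma>\<^sup>2 * SQa"
      using gL L_pos by (simp add: field_simps power2_eq_square)
    ultimately show ?thesis by (simp add: algebra_simps)
  qed
  have T2: "- 2 * \<gamma>\<^sup>2 * (real n * Na) \<le> - 4 * \<gamma>\<^sup>2 * \<mu> * SD"
  proof -
    have "2 * \<gamma>\<^sup>2 * (2 * \<mu> * SD) \<le> 2 * \<gamma>\<^sup>2 * (real n * Na)" using i2 by (intro mult_left_mono) auto
    moreover have "2 * \<gamma>\<^sup>2 * (2 * \<mu> * SD) = 4 * \<gamma>\<^sup>2 * \<mu> * SD" by simp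
    ultimately show ?thesis by linarith
  qed
  have T3: "3 / 2 * \<gamma>\<^sup>2 * SQb \<le> \<gamma> * Sp"
  proof -
    have "3 / 2 * \<gamma>\<^sup>2 * SQb \<le> 3 / 2 * \<gamma>\<^sup>2 * (2 * L * Sp)" using i3 by (intro mult_left_mono) auto
    also have "\<dots> = \<gamma> * Sp * (3 * \<gamma> * L)" by (simp add: power2_eq_square algebra_simps)
    finally show ?thesis using gL by simp
  qed
  have T4: "cc * ((1 / real n) * (real n * Sp + SD - Sp)) = cc * Sp - cc / real n * Sp + 2 * \<gamma> * (1 - \<gamma> * \<mu>) * SD"
    unfolding cc_def using n0 by (simp add: field_simps)
  have SDc: "- 2 * \<gamma> * (1 - \<mu> / L) * SD - 4 * \<gamma>\<^sup>2 * \<mu> * SD + 2 * \<gamma> * (1 - \<gamma> * \<mu>) * SD = 0"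
  proof -
    have "\<mu> / L = 3 * \<gamma> * \<mu>" using gL L_pos by (simp add: field_simps)
    thus ?thesis by (simp add: algebra_simps power2_eq_square)
  qed
  have mid: "(\<Sum>j<n. V (saga_step n f' h \<gamma> (x, \<phi>) j))
      \<le> real n * (1 - \<gamma> * \<mu>) * U + (\<gamma> + cc - cc / real n) * Sp"
    using LHS T1 T2 T3 T4 SDc by (simp add: algebra_simps) 
  have r1: "1 - \<gamma> * \<mu> \<le> \<rho>"
  proof -
    have "\<mu> / (3 * L) = \<gamma> * \<mu>" unfolding \<gamma>_def by simp
    moreover have "min (1 / (4 * real n)) (\<mu> / (3 * L)) \<le> \<mu> / (3 * L)" by simp
    ultimately show ?thesis unfolding \<rho>_def by linarith
  qed
  have r2: "\<gamma> + cc - cc / real n \<le> \<rho> * cc"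
  proof -
    have "\<rho> \<ge> 1 - 1 / (4 * real n)" unfolding \<rho>_def by simp
    moreover have ccn: "cc \<ge> 0" unfolding cc_def using gp gmu n0 by simp
    ultimately have "\<rho> * cc \<ge> (1 - 1 / (4 * real n)) * cc" by (simp add: mult_right_mono)
    moreover have "(1 - 1 / (4 * real n)) * cc - (cc - cc / real n) = 3 / 2 * \<gamma> * (1 - \<gamma> * \<mu>)"
      unfolding cc_def using n0 by (simp add: field_simps)
    moreover have "3 / 2 * \<gamma> * (1 - \<gamma> * \<mu>) \<ge> \<gamma>"
    proof -
      have "3 / 2 * \<gamma> * (1 - \<gamma> * \<mu>) \<ge> 3 / 2 * \<gamma> * (2 / 3)" using gp gmu by (intro mult_left_mono) auto
      thus ?thesis by simp
    qed
    moreover have gen: "\<And>X Y Z W g::real. X \<le> Y \<Longrightarrow> X - Z = W \<Longrightarrow> g \<le> W \<Longrightarrow> g + Z \<le> Y" by linarith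
    ultimately have "\<gamma> + (cc - cc / real n) \<le> \<rho> * cc" by blast
    thus ?thesis by simp
  qed
  have "real n * (1 - \<gamma> * \<mu>) * U \<le> real n * \<rho> * U"
    using r1 n0 Un by (simp add: mult_left_mono mult_right_mono)
  moreover have "(\<gamma> + cc - cc / real n) * Sp \<le> \<rho> * cc * Sp" using r2 Spn by (simp add: mult_right_mono)
  moreover have "real n * \<rho> * V (x, \<phi>) = real n * \<rho> * U + \<rho> * cc * Sp"
    unfolding VV using n0 by (simp add: field_simps)
  ultimately show ?thesis using mid by linarith
qed

end



lemma index_seqs_Suc:
  "index_seqs n (Suc k) = (\<lambda>(js, j). js @ [j]) ` (index_seqs n k \<times> {..<n})"
proof
  show "index_seqs n (Suc k) \<subseteq> (\<lambda>(js, j). js @ [j]) ` (index_seqs n k \<times> {..<n})"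
  proof
    fix xs assume "xs \<in> index_seqs n (Suc k)"
    hence l: "length xs = Suc k" and s: "set xs \<subseteq> {..<n}" unfolding index_seqs_def by auto
    obtain y ys where xs: "xs = ys @ [y]" and "length ys = k" using l by (metis length_Suc_conv_rev)
    thus "xs \<in> (\<lambda>(js, j). js @ [j]) ` (index_seqs n k \<times> {..<n})"
      using s unfolding index_seqs_def by (auto intro!: image_eqI[of _ _ "(ys, y)"])
  qed
  show "(\<lambda>(js, j). js @ [j]) ` (index_seqs n k \<times> {..<n}) \<subseteq> index_seqs n (Suc k)"
    unfolding index_seqs_def by auto
qed

lemma finite_index_seqs: "finite (index_seqs n k)"
proof -
  have "index_seqs n k = {xs. set xs \<subseteq> {..<n} \<and> length xs = k}" unfolding index_seqs_def by auto
  thus ?thesis using finite_lists_length_eq[of "{..<n}" k] by simp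
qed

lemma sum_index_Suc:
  "(\<Sum>js\<in>index_seqs n (Suc k). F js) = (\<Sum>js\<in>index_seqs n k. \<Sum>j<n. F (js @ [j]))"
proof -
  have inj: "inj_on (\<lambda>(js, j). js @ [j]) (index_seqs n k \<times> {..<n})"
    by (auto simp: inj_on_def)
  have "(\<Sum>js\<in>index_seqs n (Suc k). F js) = (\<Sum>p\<in>index_seqs n k \<times> {..<n}. F ((\<lambda>(js, j). js @ [j]) p))"
    unfolding index_seqs_Suc by (rule sum.reindex[OF inj, unfolded comp_def])
  also have "\<dots> = (\<Sum>js\<in>index_seqs n k. \<Sum>j<n. F (js @ [j]))"
    by (subst sum.cartesian_product) (simp add: case_prod_beta)
  finally show ?thesis .
qed

context sagaloc begin

definition "state x0 js = foldl (saga_step n f' h \<gamma>) (x0, \<lambda>_. x0) js"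

lemma rho_pos: "\<rho> \<ge> 0"
proof -
  have "min (1 / (4 * real n)) (\<mu> / (3 * L)) \<le> 1 / (4 * real n)" by simp
  also have "\<dots> \<le> 1" using n_pos by (simp add: field_simps)
  finally show ?thesis unfolding \<rho>_def by simp
qed

lemma expect_V: "expect_seq n k (\<lambda>js. V (state x0 js)) \<le> \<rho> ^ k * V (x0, \<lambda>_. x0)"
proof (induction k)
  case 0
  have "index_seqs n 0 = {[]}" unfolding index_seqs_def by auto
  thus ?case unfolding expect_seq_def state_def by simp
next
  case (Suc k)
  have n0: "real n > 0" using n_pos by simp
  have "(\<Sum>js\<in>index_seqs n (Suc k). V (state x0 js)) = (\<Sum>js\<in>index_seqs n k. \<Sum>j<n. V (saga_step n f' h \<gamma> (state x0 js) j))"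
    unfolding sum_index_Suc state_def by simp
  also have "\<dots> \<le> (\<Sum>js\<in>index_seqs n k. real n * \<rho> * V (state x0 js))"
  proof (rule sum_mono)
    fix js
    show "(\<Sum>j<n. V (saga_step n f' h \<gamma> (state x0 js) j)) \<le> real n * \<rho> * V (state x0 js)"
      using one_step[of "fst (state x0 js)" "snd (state x0 js)"] by simp
  qed
  also have "\<dots> = real n * \<rho> * (\<Sum>js\<in>index_seqs n k. V (state x0 js))" by (simp add: sum_distrib_left)
  finally have S: "(\<Sum>js\<in>index_seqs n (Suc k). V (state x0 js))
      \<le> real n * \<rho> * (\<Sum>js\<in>index_seqs n k. V (state x0 js))" .
  have "(\<Sum>js\<in>index_seqs n (Suc k). V (state x0 js)) / real n ^ Suc k
      \<le> real n * \<rho> * (\<Sum>js\<in>index_seqs n k. V (state x0 js)) / real n ^ Suc k"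
    by (rule divide_right_mono[OF S]) simp
  also have "\<dots> = \<rho> * expect_seq n k (\<lambda>js. V (state x0 js))"
    unfolding expect_seq_def using n0 by (simp add: field_simps)
  also have "\<dots> \<le> \<rho> * (\<rho> ^ k * V (x0, \<lambda>_. x0))" using Suc rho_pos by (simp add: mult_left_mono)
  finally show ?case unfolding expect_seq_def by simp
qed

lemma final:
  "expect_seq n k (\<lambda>js. (norm (saga_iter n f' h (1 / (3 * L)) x0 js - xs))\<^sup>2)
           \<le> (1 - min (1 / (4 * real n)) (\<mu> / (3 * L))) ^ k *
             ((norm (x0 - xs))\<^sup>2 + 2 * real n / (3 * L) *
               ((1 / real n) * (\<Sum>i<n. f i x0)
                 - inner ((1 / real n) *\<^sub>R (\<Sum>i<n. f' i xs)) (x0 - xs)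
                 - (1 / real n) * (\<Sum>i<n. f i xs)))"
proof -
  have n0: "real n > 0" using n_pos by simp
  have gp: "\<gamma> > 0" by (rule gam_pos)
  have gmu: "\<gamma> * \<mu> \<le> 1"
  proof -
    have "\<gamma> * \<mu> \<le> \<gamma> * L" using mu_le_L gp by (simp add: mult_left_mono)
    thus ?thesis using gam_L by simp
  qed
  have ccn: "cc \<ge> 0" unfolding cc_def using gp gmu n0 by simp
  have it: "saga_iter n f' h (1 / (3 * L)) x0 js = fst (state x0 js)" for js
    unfolding saga_iter_def state_def \<gamma>_def ..
  have "expect_seq n k (\<lambda>js. (norm (saga_iter n f' h (1 / (3 * L)) x0 js - xs))\<^sup>2)
      \<le> expect_seq n k (\<lambda>js. V (state x0 js))"
    unfolding expect_seq_def it
  proof (rule divide_right_mono)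
    show "0 \<le> real n ^ k" by simp
    show "(\<Sum>js\<in>index_seqs n k. (norm (fst (state x0 js) - xs))\<^sup>2) \<le> (\<Sum>js\<in>index_seqs n k. V (state x0 js))"
    proof (rule sum_mono)
      fix js
      have "0 \<le> cc * ((1 / real n) * Psi (snd (state x0 js)))"
        using ccn Psi_nonneg n0 by simp
      thus "(norm (fst (state x0 js) - xs))\<^sup>2 \<le> V (state x0 js)" unfolding V_def by simp
    qed
  qed
  also have "\<dots> \<le> \<rho> ^ k * V (x0, \<lambda>_. x0)" by (rule expect_V)
  also have "V (x0, \<lambda>_. x0) \<le> (norm (x0 - xs))\<^sup>2 + 2 * real n / (3 * L) *
               ((1 / real n) * (\<Sum>i<n. f i x0)
                 - inner ((1 / real n) *\<^sub>R (\<Sum>i<n. f' i xs)) (x0 - xs)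
                 - (1 / real n) * (\<Sum>i<n. f i xs))"
  proof -
    have br: "(1 / real n) * (\<Sum>i<n. f i x0) - inner ((1 / real n) *\<^sub>R (\<Sum>i<n. f' i xs)) (x0 - xs)
                 - (1 / real n) * (\<Sum>i<n. f i xs) = (1 / real n) * Psi (\<lambda>_. x0)"
      unfolding Psi_def Di_def
      by (simp add: sum_subtractf inner_sum_left right_diff_distrib)
    have pn: "0 \<le> (1 / real n) * Psi (\<lambda>_. x0)" using Psi_nonneg n0 by simp
    have "cc \<le> 2 * real n / (3 * L)" unfolding cc_def \<gamma>_def using n0 L_pos gmu gp mu_pos
      by (simp add: \<gamma>_def[symmetric] field_simps)
    hence "cc * ((1 / real n) * Psi (\<lambda>_. x0)) \<le> 2 * real n / (3 * L) * ((1 / real n) * Psi (\<lambda>_. x0))"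
      using pn by (rule mult_right_mono)
    thus ?thesis unfolding V_def br by simp
  qed
  hence "\<rho> ^ k * V (x0, \<lambda>_. x0) \<le> \<rho> ^ k * ((norm (x0 - xs))\<^sup>2 + 2 * real n / (3 * L) *
               ((1 / real n) * (\<Sum>i<n. f i x0)
                 - inner ((1 / real n) *\<^sub>R (\<Sum>i<n. f' i xs)) (x0 - xs)
                 - (1 / real n) * (\<Sum>i<n. f i xs)))"
    using rho_pos by (simp add: mult_left_mono)
  finally show ?thesis unfolding \<rho>_def .
qed

end



theorem mainTheorem6:
  fixes n :: nat and f :: "nat \<Rightarrow> 'a::euclidean_space \<Rightarrow> real" and f' :: "nat \<Rightarrow> 'a \<Rightarrow> 'a"
    and h :: "'a \<Rightarrow> ereal" and L \<mu> :: real and x0 xs :: 'a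
  assumes n_pos: "n \<ge> 1"
    and mu_pos: "\<mu> > 0" and L_pos: "L > 0"
    and deriv: "\<And>i x. i < n \<Longrightarrow> (f i has_derivative (\<lambda>v. inner (f' i x) v)) (at x)"
    and cvx: "\<And>i. i < n \<Longrightarrow> convex_on UNIV (f i)"
    and lip: "\<And>i x y. i < n \<Longrightarrow> norm (f' i x - f' i y) \<le> L * norm (x - y)"
    and strong: "\<And>i. i < n \<Longrightarrow> strongly_convex_grad \<mu> (f i) (f' i)"
    and h_proper: "proper_fun h" and h_closed: "closed_fun h" and h_convex: "convex_fun h"
    and xs_min: "\<And>x. ereal ((1 / real n) * (\<Sum>i<n. f i xs)) + h xs
                       \<le> ereal ((1 / real n) * (\<Sum>i<n. f i x)) + h x"
  shows "\<And>k. expect_seq n k (\<lambda>js. (norm (saga_iter n f' h (1 / (3 * L)) x0 js - xs))\<^sup>2)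
           \<le> (1 - min (1 / (4 * real n)) (\<mu> / (3 * L))) ^ k *
             ((norm (x0 - xs))\<^sup>2 + 2 * real n / (3 * L) *
               ((1 / real n) * (\<Sum>i<n. f i x0)
                 - inner ((1 / real n) *\<^sub>R (\<Sum>i<n. f' i xs)) (x0 - xs)
                 - (1 / real n) * (\<Sum>i<n. f i xs)))"
  proof -
  have loc: "sagaloc n f f' h L \<mu> xs"
    unfolding sagaloc_def using n_pos mu_pos L_pos deriv lip strong h_proper h_closed h_convex xs_min
    by blast
  interpret sagaloc n f f' h L \<mu> xs by (rule loc)
  fix k
  show "expect_seq n k (\<lambda>js. (norm (saga_iter n f' h (1 / (3 * L)) x0 js - xs))\<^sup>2)
           \<le> (1 - min (1 / (4 * real n)) (\<mu> / (3 * L))) ^ k *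
             ((norm (x0 - xs))\<^sup>2 + 2 * real n / (3 * L) *
               ((1 / real n) * (\<Sum>i<n. f i x0)
                 - inner ((1 / real n) *\<^sub>R (\<Sum>i<n. f' i xs)) (x0 - xs)
                 - (1 / real n) * (\<Sum>i<n. f i xs)))"
    by (rule final)
qed


end
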